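(* Let $n\geqslant 2$ and $c\geqslant 1$ be integers and let $\Gamma$ be an abelian group of order $2nc$. A diagonal $\mathrm{MRS}_\Gamma(n;2;c)$ exists if and only if $\Gamma$ contains an element of order $n$.
   Context: For positive integers $m,n,s,k,c$ and an abelian group $\Gamma$ of order $nkc$, an $\mathrm{MRS}_\Gamma(m,n;s,k;c)$ is a set of $c$ partially filled $m\times n$ arrays (some cells may be empty) with entries in $\Gamma$ such that: every element of $\Gamma$ appears exactly once and in a unique array; in every array each row contains exactly $s$ filled cells and each column contains exactly $k$ filled cells; and there exist $\omega,\delta\in\Gamma$ such that in every array each row sum is $\omega$ and each column sum is $\delta$. $\mathrm{MRS}_\Gamma(n;k;c)$ denotes $\mathrm{MRS}_\Gamma(n,n;k,k;c)$. In an $n\times n$ array, for $0\leqslant \ell\leqslant n-1$ the diagonal $D_\ell$ is the set of cells $(i,j)$ with $j-i\equiv \ell\pmod n$. An $\mathrm{MRS}_\Gamma(n;k;c)$ is diagonal if, in each of its arrays, the filled cells are exactly the cells of $k$ consecutive diagonals $D_{t},D_{t+1},\ldots,D_{t+k-1}$ (indices modulo $n$). *)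

theory Defs
  imports "HOL-Algebra.Algebra"
begin

text \<open>A family of c partially filled m x n arrays with entries in the group G:
  A t i j = Some g means cell (i,j) of array t (t < c, i < m, j < n) holds g;
  None means the cell is empty. The group is written multiplicatively in
  HOL-Algebra, so sums are finprod.\<close>

type_synonym 'a arrays = "nat \<Rightarrow> nat \<Rightarrow> nat \<Rightarrow> 'a option"

definition filled_cells :: "nat \<Rightarrow> nat \<Rightarrow> nat \<Rightarrow> 'a arrays \<Rightarrow> (nat \<times> nat \<times> nat) set" where
  "filled_cells m n c A = {(t,i,j). t < c \<and> i < m \<and> j < n \<and> A t i j \<noteq> None}"

definition MRS :: "('a, 'b) monoid_scheme \<Rightarrow> nat \<Rightarrow> nat \<Rightarrow> nat \<Rightarrow> nat \<Rightarrow> nat \<Rightarrow> 'a arrays \<Rightarrow> bool" where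
  "MRS G m n s k c A \<longleftrightarrow>
     card (carrier G) = n * k * c \<and>
     bij_betw (\<lambda>(t,i,j). the (A t i j)) (filled_cells m n c A) (carrier G) \<and>
     (\<forall>t<c. \<forall>i<m. card {j. j < n \<and> A t i j \<noteq> None} = s) \<and>
     (\<forall>t<c. \<forall>j<n. card {i. i < m \<and> A t i j \<noteq> None} = k) \<and>
     (\<exists>\<omega>\<in>carrier G. \<exists>\<delta>\<in>carrier G.
        (\<forall>t<c. \<forall>i<m. finprod G (\<lambda>j. the (A t i j)) {j. j < n \<and> A t i j \<noteq> None} = \<omega>) \<and>
        (\<forall>t<c. \<forall>j<n. finprod G (\<lambda>i. the (A t i j)) {i. i < m \<and> A t i j \<noteq> None} = \<delta>))"

definition in_diag :: "nat \<Rightarrow> nat \<Rightarrow> nat \<Rightarrow> nat \<Rightarrow> bool" where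
  "in_diag n l i j \<longleftrightarrow> (int j - int i) mod int n = int l mod int n"

definition diagonal_MRS :: "('a, 'b) monoid_scheme \<Rightarrow> nat \<Rightarrow> nat \<Rightarrow> nat \<Rightarrow> 'a arrays \<Rightarrow> bool" where
  "diagonal_MRS G n k c A \<longleftrightarrow>
     MRS G n n k k c A \<and>
     (\<forall>t<c. \<exists>d<n. \<forall>i<n. \<forall>j<n.
        (A t i j \<noteq> None \<longleftrightarrow> (\<exists>r<k. in_diag n (d + r) i j)))"

end

theory Submission
  imports Defs
begin

lemma (in comm_group) exists_nonsquare_coset:
  assumes fin: "finite (carrier G)" and sub: "subgroup H G"
    and cardR: "card (rcosets H) = 2 * c" and c1: "c \<ge> 1"
  shows "\<exists>w\<in>carrier G. \<forall>y\<in>carrier G. w \<otimes> inv (y \<otimes> y) \<notin> H"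
proof (rule ccontr)
  assume neg: "\<not> ?thesis"
  have nrm: "H \<lhd> G" using sub subgroup_imp_normal by blast
  interpret N: normal H G using nrm .
  have grpQ: "group (G Mod H)" by (rule N.factorgroup_is_group)
  have carQ: "carrier (G Mod H) = rcosets H"
    unfolding FactGroup_def by simp
  have finQ: "finite (carrier (G Mod H))" using carQ fin
    by (simp add: RCOSETS_def)
  have ordQ: "order (G Mod H) = (2 ^ 1) * c" using carQ cardR by (simp add: order_def)
  obtain K where K: "subgroup K (G Mod H)" "card K = 2 ^ 1"
    using sylow_thm[OF _ grpQ ordQ finQ] by auto
  have HK: "H \<in> K" using subgroup.one_closed[OF K(1)] by simp
  obtain Z where Z: "Z \<in> K" "Z \<noteq> H"
  proof -
    have "\<not> K \<subseteq> {H}"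
    proof
      assume "K \<subseteq> {H}"
      then have "card K \<le> card {H}" by (intro card_mono) auto
      with K(2) show False by simp
    qed
    then show ?thesis using that by blast
  qed
  have ZQ: "Z \<in> rcosets H" using subgroup.subset[OF K(1)] Z(1) carQ by auto
  then obtain z where z: "z \<in> carrier G" "Z = H #> z" unfolding RCOSETS_def by auto
  have Hsub: "H \<subseteq> carrier G" using sub subgroup.subset by blast
  have zH: "z \<notin> H" using coset_join2[OF z(1) sub] z Z(2) by auto
  have ZZ: "Z <#> Z \<in> K" using subgroup.m_closed[OF K(1) Z(1) Z(1)] by simp
  have ZZe: "Z <#> Z = H #> (z \<otimes> z)" using z N.rcos_sum by simp
  have H1: "H #> \<one> = H" using coset_join2[OF one_closed sub] subgroup.one_closed[OF sub] by simp
  have Kfin: "finite K" using K(2) card_ge_0_finite by (metis pos2 power_one_right)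
  have KHZ: "K = {H, Z}"
  proof -
    have "{H, Z} \<subseteq> K" using HK Z by auto
    moreover have "card {H, Z} = card K" using K(2) Z(2) by simp
    ultimately show ?thesis using card_subset_eq[OF Kfin] by metis
  qed
  have "H #> (z \<otimes> z) \<noteq> Z"
  proof
    assume "H #> (z \<otimes> z) = Z"
    then have "z \<otimes> z \<in> H #> z" using z rcos_self[OF _ sub, of "z \<otimes> z"] by auto
    then have "z \<otimes> z \<otimes> inv z \<in> H"
      using subgroup.rcos_module_imp[OF sub is_group z(1)] by blast
    then have "z \<in> H" using z(1) by (simp add: m_assoc)
    with zH show False by simp
  qed
  then have zzH: "H #> (z \<otimes> z) = H" using ZZ ZZe KHZ by auto
  define s where "s = (\<lambda>C. C <#> C)"
  have s_eq: "s (H #> y) = H #> (y \<otimes> y)" if "y \<in> carrier G" for y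
    using that N.rcos_sum s_def by simp
  have "s ` (rcosets H) = rcosets H"
  proof
    show "s ` (rcosets H) \<subseteq> rcosets H"
      using s_eq rcosetsI[OF Hsub] unfolding RCOSETS_def by auto
    show "rcosets H \<subseteq> s ` (rcosets H)"
    proof
      fix C assume "C \<in> rcosets H"
      then obtain w where w: "w \<in> carrier G" "C = H #> w" unfolding RCOSETS_def by auto
      then obtain y where y: "y \<in> carrier G" "w \<otimes> inv (y \<otimes> y) \<in> H" using neg by auto
      then have "w \<in> H #> (y \<otimes> y)"
        using subgroup.rcos_module_rev[OF sub is_group _ w(1)] by simp
      then have "H #> (y \<otimes> y) = H #> w" using repr_independence[OF _ _ sub] y by simp
      then have "C = s (H #> y)" using s_eq y w by simp
      moreover have "H #> y \<in> rcosets H" using rcosetsI[OF Hsub y(1)] .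
      ultimately show "C \<in> s ` (rcosets H)" by blast
    qed
  qed
  then have "inj_on s (rcosets H)"
    using eq_card_imp_inj_on finQ carQ by metis
  moreover have "s (H #> z) = s (H #> \<one>)" using s_eq[OF z(1)] s_eq[OF one_closed] zzH H1 by simp
  moreover have "H #> z \<in> rcosets H" "H #> \<one> \<in> rcosets H"
    using rcosetsI[OF Hsub] z(1) by auto
  ultimately have "H #> z = H #> \<one>" unfolding inj_on_def by blast
  then show False using Z(2) z H1 by simp
qed

lemma fp2:
  assumes "comm_monoid G" "a \<noteq> b" "f a \<in> carrier G" "f b \<in> carrier G"
  shows "finprod G f {a, b} = f a \<otimes>\<^bsub>G\<^esub> f b"
proof -
  interpret comm_monoid G by fact
  show ?thesis using assms by (simp add: Pi_def)
qed

lemma diag_mod_lemma: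
  assumes "i < n" "d < n"
  shows "in_diag n d i ((i + d) mod n)"
proof -
  have "int ((i + d) mod n) = (int i + int d) mod int n" by (simp add: zmod_int)
  then have "(int ((i + d) mod n) - int i) mod int n = (int i + int d - int i) mod int n"
    by (simp add: mod_diff_left_eq)
  then show ?thesis unfolding in_diag_def by simp
qed

lemma (in comm_group) necessity:
  assumes n2: "n \<ge> 2" and c1: "c \<ge> 1"
    and D: "diagonal_MRS G n 2 c A"
  shows "\<exists>x\<in>carrier G. ord x = n"
proof -
  have M: "MRS G n n 2 2 c A" using D unfolding diagonal_MRS_def by simp
  obtain d where d: "d < n" "\<forall>i<n. \<forall>j<n. (A 0 i j \<noteq> None \<longleftrightarrow> (\<exists>r<2. in_diag n (d + r) i j))"
  proof -
    have "\<forall>t<c. \<exists>d<n. \<forall>i<n. \<forall>j<n. (A t i j \<noteq> None \<longleftrightarrow> (\<exists>r<2. in_diag n (d + r) i j))"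
      using D unfolding diagonal_MRS_def by (rule conjunct2)
    moreover have "0 < c" using c1 by simp
    ultimately show ?thesis using that by blast
  qed
  note Mu = M[unfolded MRS_def]
  have bij: "bij_betw (\<lambda>(t,i,j). the (A t i j)) (filled_cells n n c A) (carrier G)"
    using Mu by (elim conjE)
  have rowc: "\<forall>t<c. \<forall>i<n. card {j. j < n \<and> A t i j \<noteq> None} = 2"
    using Mu by (elim conjE)
  have colc: "\<forall>t<c. \<forall>j<n. card {i. i < n \<and> A t i j \<noteq> None} = 2"
    using Mu by (elim conjE)
  obtain \<omega> \<delta> where wd: "\<omega> \<in> carrier G" "\<delta> \<in> carrier G"
    "\<forall>t<c. \<forall>i<n. finprod G (\<lambda>j. the (A t i j)) {j. j < n \<and> A t i j \<noteq> None} = \<omega>"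
    "\<forall>t<c. \<forall>j<n. finprod G (\<lambda>i. the (A t i j)) {i. i < n \<and> A t i j \<noteq> None} = \<delta>"
    using Mu by (elim conjE bexE) (rule that; assumption)
  define p where "p i = (i + d) mod n" for i
  define q where "q i = (i + (d + 1)) mod n" for i
  have n0: "n > 0" using n2 by simp
  have pn: "p i < n" "q i < n" for i using n0 by (auto simp: p_def q_def)
  have Ap: "A 0 i (p i) \<noteq> None" if "i < n" for i
    using d(2) that pn diag_mod_lemma[OF that d(1)] unfolding p_def by fastforce
  have Aq: "A 0 i (q i) \<noteq> None" if "i < n" for i
  proof (cases "d + 1 < n")
    case True
    then show ?thesis using d(2) that pn diag_mod_lemma[OF that True] unfolding q_def
      by (metis add.commute lessI one_add_one plus_1_eq_Suc zero_less_Suc)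
  next
    case False
    then have "d + 1 = n" using d(1) by simp
    then have "q i = i mod n" unfolding q_def by simp
    moreover have "in_diag n (d + 1) i (i mod n)" using \<open>d + 1 = n\<close> that
      unfolding in_diag_def by simp
    ultimately show ?thesis using d(2) that pn
      by (metis lessI one_add_one plus_1_eq_Suc)
  qed
  have pq: "p i \<noteq> q i" for i
  proof
    assume "p i = q i"
    then have "(i + d) mod n = Suc (i + d) mod n" unfolding p_def q_def by simp
    then show False using n2 by (metis mod_Suc nat.simps(3) numeral_2_eq_2 Suc_le_eq le_antisym
          mod_less_divisor n0 not_less_eq_eq)
  qed
  have fin_cells: "(0, i, j) \<in> filled_cells n n c A" if "i < n" "j < n" "A 0 i j \<noteq> None" for i j
    using that c1 unfolding filled_cells_def by auto
  have incar: "the (A 0 i j) \<in> carrier G" if "i < n" "j < n" "A 0 i j \<noteq> None" for i j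
    using bij_betwE[OF bij] fin_cells[OF that] by fastforce
  define a where "a i = the (A 0 i (p i))" for i
  define b where "b i = the (A 0 i (q i))" for i
  have ac: "a i \<in> carrier G" if "i < n" for i using incar[OF that pn(1) Ap[OF that]] a_def by simp
  have bc: "b i \<in> carrier G" if "i < n" for i using incar[OF that pn(2) Aq[OF that]] b_def by simp
  have row: "a i \<otimes> b i = \<omega>" if "i < n" for i
  proof -
    have sub: "{p i, q i} \<subseteq> {j. j < n \<and> A 0 i j \<noteq> None}" using pn Ap Aq that by auto
    have "card {p i, q i} = 2" using pq by simp
    then have eq: "{j. j < n \<and> A 0 i j \<noteq> None} = {p i, q i}"
    proof -
      have fin: "finite {j. j < n \<and> A 0 i j \<noteq> None}" by simp
      have "card {j. j < n \<and> A 0 i j \<noteq> None} = 2" using rowc c1 that by simp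
      then show ?thesis using card_subset_eq[OF fin sub] \<open>card {p i, q i} = 2\<close> by simp
    qed
    have "finprod G (\<lambda>j. the (A 0 i j)) {p i, q i} = a i \<otimes> b i"
      using fp2[OF comm_monoid_axioms pq] ac bc that a_def b_def by simp
    moreover have "0 < c" using c1 by simp
    ultimately show ?thesis using wd(3)[rule_format, OF \<open>0 < c\<close> that] eq by simp
  qed
  have pS: "p (Suc i mod n) = q i" for i
    unfolding p_def q_def by (simp add: mod_add_left_eq)
  have col: "b i \<otimes> a (Suc i mod n) = \<delta>" if "i < n" for i
  proof -
    define i' where "i' = Suc i mod n"
    have i'n: "i' < n" using n0 i'_def by simp
    have ii: "i \<noteq> i'" using n2 that unfolding i'_def
      by (metis Suc_le_eq le_antisym mod_Suc mod_less n_not_Suc_n not_less_eq_eq numeral_2_eq_2 zero_neq_numeral)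
    have sub: "{i, i'} \<subseteq> {k. k < n \<and> A 0 k (q i) \<noteq> None}" using that i'n Aq Ap[OF i'n] pS i'_def by auto
    have "card {i, i'} = 2" using ii by simp
    then have eq: "{k. k < n \<and> A 0 k (q i) \<noteq> None} = {i, i'}"
    proof -
      have fin: "finite {k. k < n \<and> A 0 k (q i) \<noteq> None}" by simp
      have "card {k. k < n \<and> A 0 k (q i) \<noteq> None} = 2" using colc c1 pn by simp
      then show ?thesis using card_subset_eq[OF fin sub] \<open>card {i, i'} = 2\<close> by simp
    qed
    have "finprod G (\<lambda>k. the (A 0 k (q i))) {i, i'} = b i \<otimes> a i'"
    proof -
      have e1: "the (A 0 i' (q i)) = a i'" using pS a_def i'_def by metis
      have e2: "the (A 0 i (q i)) = b i" using b_def by simp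
      show ?thesis
        using fp2[OF comm_monoid_axioms ii, of "\<lambda>k. the (A 0 k (q i))"] e1 e2 ac[OF i'n] bc[OF that]
        by simp
    qed
    moreover have "0 < c" using c1 by simp
    ultimately show ?thesis using wd(4)[rule_format, OF \<open>0 < c\<close> pn(2)[of i]] eq i'_def by simp
  qed
  define g where "g = \<delta> \<otimes> inv \<omega>"
  have gc: "g \<in> carrier G" using wd g_def by simp
  have step: "a (Suc i mod n) = a i \<otimes> g" if "i < n" for i
  proof -
    have a'c: "a (Suc i mod n) \<in> carrier G" using ac n0 by simp
    have "a (Suc i mod n) = a (Suc i mod n) \<otimes> (a i \<otimes> b i) \<otimes> inv \<omega>"
      using row[OF that] a'c wd by (simp add: m_assoc)
    also have "\<dots> = a i \<otimes> (b i \<otimes> a (Suc i mod n)) \<otimes> inv \<omega>"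
      using a'c ac[OF that] bc[OF that] by (simp add: m_ac)
    also have "\<dots> = a i \<otimes> g" using col[OF that] g_def ac[OF that] wd by (simp add: m_assoc)
    finally show ?thesis .
  qed
  have apow: "a k = a 0 \<otimes> g [^] k" if "k < n" for k
    using that
  proof (induction k)
    case 0
    then show ?case using ac by simp
  next
    case (Suc k)
    have "Suc k mod n = Suc k" using Suc.prems by simp
    then have "a (Suc k) = a k \<otimes> g" using step[of k] Suc.prems by simp
    also have "\<dots> = a 0 \<otimes> g [^] Suc k" using Suc ac gc by (simp add: m_assoc nat_pow_Suc)
    finally show ?case .
  qed
  have "a 0 = a (Suc (n - 1) mod n)" using n0 by simp
  also have "\<dots> = a 0 \<otimes> g [^] (n - 1) \<otimes> g" using step[of "n - 1"] apow[of "n - 1"] n0 by simp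
  also have "\<dots> = a 0 \<otimes> g [^] n" using ac n0 gc
    by (metis Suc_diff_1 m_assoc nat_pow_Suc nat_pow_closed)
  finally have "a 0 \<otimes> \<one> = a 0 \<otimes> g [^] n" using ac n0 by simp
  then have gn: "g [^] n = \<one>" using ac n0 gc by (metis l_cancel nat_pow_closed one_closed)
  have inj: "inj_on (\<lambda>(t,i,j). the (A t i j)) (filled_cells n n c A)" using bij bij_betw_def by blast
  have gk: "g [^] k \<noteq> \<one>" if "0 < k" "k < n" for k
  proof
    assume "g [^] k = \<one>"
    then have "a k = a 0" using apow[OF that(2)] ac n0 by simp
    then have "(0, k, p k) = (0, 0, p 0)"
      using inj_onD[OF inj _ fin_cells[OF that(2) pn(1) Ap[OF that(2)]] fin_cells[OF n0 pn(1) Ap[OF n0]]]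
      a_def by simp
    with that show False by simp
  qed
  have "ord g dvd n" using gn pow_eq_id gc by blast
  then have o1: "ord g \<le> n" "ord g > 0" using n0 by (auto intro: dvd_imp_le dvd_pos_nat)
  have "ord g = n"
  proof (rule ccontr)
    assume "ord g \<noteq> n"
    then have "ord g < n" using o1 by simp
    then show False using gk[OF o1(2)] gc by simp
  qed
  then show ?thesis using gc by blast
qed

lemma involution_split:
  assumes fin: "finite XX" and invo: "\<And>C. C \<in> XX \<Longrightarrow> sg C \<in> XX \<and> sg (sg C) = C \<and> sg C \<noteq> C"
  shows "\<exists>R \<subseteq> XX. R \<inter> sg ` R = {} \<and> R \<union> sg ` R = XX \<and> card XX = 2 * card R"
proof -
  obtain f where f: "bij_betw f XX {0..<card XX}" using ex_bij_betw_finite_nat[OF fin] by blast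
  then have fi: "inj_on f XX" by (simp add: bij_betw_def)
  define R where "R = {C \<in> XX. f C < f (sg C)}"
  have RX: "R \<subseteq> XX" unfolding R_def by auto
  have disj: "R \<inter> sg ` R = {}"
  proof (rule ccontr)
    assume "R \<inter> sg ` R \<noteq> {}"
    then obtain D where D: "D \<in> R" "sg D \<in> R" by auto
    then have "f D < f (sg D)" "f (sg D) < f (sg (sg D))" unfolding R_def by auto
    moreover have "sg (sg D) = D" using invo D RX by auto
    ultimately show False by simp
  qed
  have cov: "R \<union> sg ` R = XX"
  proof
    show "R \<union> sg ` R \<subseteq> XX" using RX invo by auto
    show "XX \<subseteq> R \<union> sg ` R"
    proof
      fix C assume C: "C \<in> XX"
      have ne: "f C \<noteq> f (sg C)" using invo[OF C] fi C inj_onD by metis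
      show "C \<in> R \<union> sg ` R"
      proof (cases "f C < f (sg C)")
        case True then show ?thesis using C R_def by auto
      next
        case False
        then have "f (sg C) < f (sg (sg C))" using ne invo[OF C] by auto
        then have "sg C \<in> R" using invo[OF C] R_def by auto
        then show ?thesis using invo[OF C] by (metis UnI2 image_eqI)
      qed
    qed
  qed
  have injs: "inj_on sg R" using invo RX by (metis inj_onI subsetD)
  have "card XX = card R + card (sg ` R)"
    using cov disj card_Un_disjoint[of R "sg ` R"] fin RX finite_subset by (metis finite_imageI)
  then have "card XX = 2 * card R" using card_image[OF injs] by simp
  then show ?thesis using RX disj cov by blast
qed

lemma diag_iff:
  assumes "i < n" "j < n"
  shows "in_diag n r i j \<longleftrightarrow> j = (i + r) mod n"
proof -
  have "in_diag n r i j \<longleftrightarrow> (int j - int i) mod int n = int r mod int n" unfolding in_diag_def by simp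
  also have "\<dots> \<longleftrightarrow> int n dvd (int j - int i - int r)" by (simp add: mod_eq_dvd_iff)
  also have "\<dots> \<longleftrightarrow> int n dvd (int j - (int i + int r))" by (simp add: algebra_simps)
  also have "\<dots> \<longleftrightarrow> int j mod int n = (int i + int r) mod int n" by (simp add: mod_eq_dvd_iff)
  also have "\<dots> \<longleftrightarrow> int j = int ((i + r) mod n)" using assms by (simp add: zmod_int)
  finally show ?thesis by simp
qed

lemma ex_less2: "(\<exists>r::nat<2. Q r) \<longleftrightarrow> Q 0 \<or> Q 1"
  by (auto simp: less_2_cases_iff)

lemma prev_lemma:
  assumes "n \<ge> 2" "i < n" "j < n"
  shows "j = Suc i mod n \<longleftrightarrow> i = (if j = 0 then n - 1 else j - 1)"
proof (cases "Suc i < n")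
  case True
  then show ?thesis by auto
next
  case False
  then have "i = n - 1" using assms by simp
  then have "Suc i mod n = 0" using assms by simp
  then show ?thesis using assms \<open>i = n - 1\<close> by auto
qed

lemma (in group) pow_mod_ord:
  assumes "x \<in> carrier G" "ord x = n"
  shows "x [^] (k mod n) = x [^] k"
proof -
  have "x [^] k = x [^] (n * (k div n) + k mod n)" by simp
  also have "\<dots> = (x [^] n) [^] (k div n) \<otimes> x [^] (k mod n)"
    using assms by (simp add: nat_pow_mult nat_pow_pow)
  also have "\<dots> = x [^] (k mod n)" using assms pow_ord_eq_1[OF assms(1)] by simp
  finally show ?thesis by simp
qed

lemma (in group) cancel_inv1 [simp]:
  "x \<in> carrier G \<Longrightarrow> y \<in> carrier G \<Longrightarrow> x \<otimes> (inv x \<otimes> y) = y"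
  by (simp add: m_assoc[symmetric])

lemma (in group) cancel_inv2 [simp]:
  "x \<in> carrier G \<Longrightarrow> y \<in> carrier G \<Longrightarrow> inv x \<otimes> (x \<otimes> y) = y"
  by (simp add: m_assoc[symmetric])

lemma (in comm_group) cancel_inv3 [simp]:
  "x \<in> carrier G \<Longrightarrow> y \<in> carrier G \<Longrightarrow> z \<in> carrier G \<Longrightarrow> x \<otimes> (y \<otimes> (inv x \<otimes> z)) = y \<otimes> z"
  by (simp add: m_lcomm[of x y])

lemma (in comm_group) cancel_inv4 [simp]:
  "x \<in> carrier G \<Longrightarrow> y \<in> carrier G \<Longrightarrow> z \<in> carrier G \<Longrightarrow> inv x \<otimes> (y \<otimes> (x \<otimes> z)) = y \<otimes> z"
  by (simp add: m_lcomm[of "inv x" y])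

lemma (in comm_group) cancel_inv5 [simp]:
  "x \<in> carrier G \<Longrightarrow> y \<in> carrier G \<Longrightarrow> x \<otimes> (y \<otimes> inv x) = y"
  by (simp add: m_comm[of y "inv x"])

lemma (in comm_group) cancel_inv6 [simp]:
  "x \<in> carrier G \<Longrightarrow> y \<in> carrier G \<Longrightarrow> inv x \<otimes> (y \<otimes> x) = y"
  by (simp add: m_comm[of y x])

lemma (in comm_group) sufficiency:
  assumes fin: "finite (carrier G)" and n2: "n \<ge> 2" and c1: "c \<ge> 1"
    and ordG: "order G = 2 * n * c" and xc: "x \<in> carrier G" and ordx: "ord x = n"
  shows "\<exists>A. diagonal_MRS G n 2 c A"
proof -
  define H where "H = generate G {x}"
  have sub: "subgroup H G" unfolding H_def using generate_is_subgroup xc by simp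
  have Hsub: "H \<subseteq> carrier G" using sub subgroup.subset by blast
  have cardH: "card H = n" using generate_pow_card[OF xc] ordx H_def by simp
  have n0: "n > 0" using n2 by simp
  have Hx: "y \<in> H \<longleftrightarrow> (\<exists>k<n. y = x [^] k)" for y
  proof -
    have "H = {x [^] k | k. k \<in> {0 .. ord x - 1}}"
      using generate_pow_on_finite_carrier[OF fin xc] ord_elems[OF fin xc] H_def by simp
    moreover have "k \<in> {0 .. ord x - 1} \<longleftrightarrow> k < n" for k using ordx n0 by auto
    ultimately show ?thesis by auto
  qed
  have xpowc: "x [^] (k::nat) \<in> carrier G" for k using xc by simp
  have cardR: "card (rcosets H) = 2 * c"
  proof -
    have "card (rcosets H) * n = 2 * c * n" using lagrange[OF sub] cardH ordG by (simp add: ac_simps)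
    then show ?thesis using n0 by simp
  qed
  obtain w where wc: "w \<in> carrier G" and wH: "\<forall>y\<in>carrier G. w \<otimes> inv (y \<otimes> y) \<notin> H"
    using exists_nonsquare_coset[OF fin sub cardR c1] by blast
  define rp where "rp C = (SOME a. a \<in> carrier G \<and> C = H #> a)" for C
  have rp: "rp C \<in> carrier G \<and> C = H #> rp C" if Cin: "C \<in> rcosets H" for C
  proof -
    obtain a where "a \<in> carrier G" "C = H #> a" using Cin unfolding RCOSETS_def by auto
    then show ?thesis unfolding rp_def by (metis (mono_tags, lifting) someI_ex)
  qed
  have coset_eq: "H #> a = H #> b" if "a \<in> carrier G" "b \<in> carrier G" "a \<otimes> inv b \<in> H" for a b
  proof -
    have "a \<in> H #> b" using subgroup.rcos_module_rev[OF sub is_group that(2,1,3)] .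
    then show ?thesis using repr_independence[OF _ that(2) sub] by simp
  qed
  have coset_eqD: "a \<otimes> inv b \<in> H" if "a \<in> carrier G" "b \<in> carrier G" "H #> a = H #> b" for a b
  proof -
    have "a \<in> H #> b" using rcos_self[OF that(1) sub] that(3) by simp
    then show ?thesis using subgroup.rcos_module_imp[OF sub is_group that(2)] by simp
  qed
  define sg where "sg C = H #> (w \<otimes> inv (rp C))" for C
  have sg_eq: "sg (H #> a) = H #> (w \<otimes> inv a)" if "a \<in> carrier G" for a
  proof -
    have r: "rp (H #> a) \<in> carrier G" "H #> a = H #> rp (H #> a)"
      using rp[OF rcosetsI[OF Hsub that]] by auto
    define a' where "a' = rp (H #> a)"
    have "a \<otimes> inv a' \<in> H" using coset_eqD[OF that r(1)] r(2) a'_def by simp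
    then have "inv (a \<otimes> inv a') \<in> H" using subgroup.m_inv_closed[OF sub] by simp
    moreover have "inv (a \<otimes> inv a') = (w \<otimes> inv a) \<otimes> inv (w \<otimes> inv a')"
      using that r(1) wc a'_def by (simp add: inv_mult m_ac)
    ultimately have "H #> (w \<otimes> inv a) = H #> (w \<otimes> inv a')"
      using coset_eq that r(1) wc a'_def by simp
    then show ?thesis unfolding sg_def a'_def by simp
  qed
  have sg_prop: "sg C \<in> rcosets H \<and> sg (sg C) = C \<and> sg C \<noteq> C" if Cin: "C \<in> rcosets H" for C
  proof -
    obtain a where a: "a \<in> carrier G" "C = H #> a" using Cin unfolding RCOSETS_def by auto
    have s1: "sg C = H #> (w \<otimes> inv a)" using sg_eq a by simp
    have "sg (sg C) = H #> (w \<otimes> inv (w \<otimes> inv a))" using s1 sg_eq a wc by simp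
    also have "w \<otimes> inv (w \<otimes> inv a) = a" using a wc by (simp add: inv_mult m_ac)
    finally have s2: "sg (sg C) = C" using a by simp
    have s3: "sg C \<noteq> C"
    proof
      assume "sg C = C"
      then have "(w \<otimes> inv a) \<otimes> inv a \<in> H" using coset_eqD[of "w \<otimes> inv a" a] s1 a wc by simp
      moreover have "(w \<otimes> inv a) \<otimes> inv a = w \<otimes> inv (a \<otimes> a)" using a wc by (simp add: inv_mult m_ac)
      ultimately show False using wH a by simp
    qed
    show ?thesis using s1 s2 s3 rcosetsI[OF Hsub] a wc by simp
  qed
  have "card (rcosets H) > 0" using cardR c1 by simp
  then have finR: "finite (rcosets H)" by (rule card_ge_0_finite)
  have "\<exists>R \<subseteq> rcosets H. R \<inter> sg ` R = {} \<and> R \<union> sg ` R = rcosets H \<and> card (rcosets H) = 2 * card R"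
    by (rule involution_split[OF finR]) (rule sg_prop)
  then obtain R where R: "R \<subseteq> rcosets H" "R \<inter> sg ` R = {}" "R \<union> sg ` R = rcosets H"
      "card (rcosets H) = 2 * card R"
    by (elim exE conjE) (rule that; assumption)
  have cR: "card R = c" using R(4) cardR by simp
  have finR': "finite R" using finR R(1) by (rule finite_subset[rotated])
  obtain e where e: "bij_betw e {0..<c} R" using ex_bij_betw_nat_finite[OF finR'] unfolding cR by (elim exE) (rule that)
  have eR: "e t \<in> R" if "t < c" for t using e that bij_betwE by fastforce
  have einj: "t = s" if "t < c" "s < c" "e t = e s" for t s
    using e that unfolding bij_betw_def inj_on_def by auto
  define rep where "rep t = rp (e t)" for t
  have repc: "rep t \<in> carrier G" and rep_e: "e t = H #> rep t" if "t < c" for t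
    using rp[of "e t"] eR[OF that] R(1) rep_def by auto
  define P where "P t i = rep t \<otimes> x [^] (i::nat)" for t i
  define N where "N t i = w \<otimes> inv (P t i)" for t i
  have Pc: "P t i \<in> carrier G" if "t < c" for t i using repc[OF that] xc P_def by simp
  have Nc: "N t i \<in> carrier G" if "t < c" for t i using Pc[OF that] wc N_def by simp
  have xH: "x [^] i \<in> H" if "i < n" for i using Hx that by auto
  have cosP: "H #> P t i = e t" if "t < c" "i < n" for t i
  proof -
    have "P t i \<otimes> inv (rep t) = x [^] i" using repc[OF that(1)] xc P_def by (simp add: m_comm[of "rep t"] m_assoc)
    then show ?thesis using coset_eq[OF Pc[OF that(1)] repc[OF that(1)]] xH[OF that(2)] rep_e[OF that(1)] by simp
  qed
  have cosN: "H #> N t i = sg (e t)" if "t < c" "i < n" for t i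
  proof -
    have "N t i \<otimes> inv (w \<otimes> inv (rep t)) = inv (x [^] i)"
      using repc[OF that(1)] xc wc P_def N_def by (simp add: inv_mult m_ac)
    moreover have "inv (x [^] i) \<in> H" using xH[OF that(2)] subgroup.m_inv_closed[OF sub] by simp
    ultimately have "H #> N t i = H #> (w \<otimes> inv (rep t))"
      using coset_eq[OF Nc[OF that(1)]] repc[OF that(1)] wc by simp
    then show ?thesis using sg_eq[OF repc[OF that(1)]] rep_e[OF that(1)] by simp
  qed
  have F1: "t = s \<and> i = k" if "t < c" "s < c" "i < n" "k < n" "P t i = P s k" for t s i k
  proof -
    have "e t = e s" using cosP that by metis
    then have ts: "t = s" using einj that by blast
    then have "x [^] i = x [^] k" using that(5) repc[OF that(1)] xc P_def l_cancel by (metis nat_pow_closed)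
    then have "i = k" using ord_inj[OF xc] that(3,4) ordx unfolding inj_on_def by auto
    then show ?thesis using ts by simp
  qed
  have F2: "t = s \<and> i = k" if "t < c" "s < c" "i < n" "k < n" "N t i = N s k" for t s i k
  proof -
    have "inv (P t i) = inv (P s k)" using that(5) N_def wc Pc that(1,2) l_cancel by (metis inv_closed)
    then have "P t i = P s k" using Pc that(1,2) inv_inv by metis
    then show ?thesis using F1 that by blast
  qed
  have F3: "P t i \<noteq> N s k" if "t < c" "s < c" "i < n" "k < n" for t s i k
  proof
    assume "P t i = N s k"
    then have "e t = sg (e s)" using cosP cosN that by metis
    then show False using R(2) eR that by blast
  qed
  have F4: "\<exists>t<c. \<exists>i<n. y = P t i \<or> y = N t i" if yc: "y \<in> carrier G" for y
  proof -
    have "H #> y \<in> R \<union> sg ` R" using R(3) rcosetsI[OF Hsub yc] by simp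
    then show ?thesis
    proof
      assume "H #> y \<in> R"
      then obtain t where t: "t < c" "H #> y = e t" using e unfolding bij_betw_def by auto
      then have "y \<otimes> inv (rep t) \<in> H" using coset_eqD[OF yc repc[OF t(1)]] rep_e[OF t(1)] by simp
      then obtain k where k: "k < n" "y \<otimes> inv (rep t) = x [^] k" using Hx by blast
      then have "y = rep t \<otimes> x [^] k" using yc repc[OF t(1)] xc
        by (metis inv_solve_right m_comm nat_pow_closed)
      then have "y = P t k" using P_def by simp
      then show ?thesis using t k by blast
    next
      assume "H #> y \<in> sg ` R"
      then obtain C where C: "C \<in> R" "H #> y = sg C" by auto
      then obtain t where t: "t < c" "C = e t" using e unfolding bij_betw_def by auto
      have wr: "w \<otimes> inv (rep t) \<in> carrier G" using wc repc[OF t(1)] by simp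
      have "H #> y = H #> (w \<otimes> inv (rep t))" using C t sg_eq[OF repc[OF t(1)]] rep_e[OF t(1)] by simp
      then have "y \<otimes> inv (w \<otimes> inv (rep t)) \<in> H" using coset_eqD[OF yc wr] by simp
      then have "inv (y \<otimes> inv (w \<otimes> inv (rep t))) \<in> H" using subgroup.m_inv_closed[OF sub] by simp
      then obtain k where k: "k < n" "inv (y \<otimes> inv (w \<otimes> inv (rep t))) = x [^] k" using Hx by blast
      have "y = w \<otimes> inv (rep t \<otimes> x [^] k)"
      proof -
        have "y \<otimes> inv (w \<otimes> inv (rep t)) = inv (x [^] k)"
          using k(2) yc wr by (metis inv_inv m_closed inv_closed)
        then have "y = inv (x [^] k) \<otimes> (w \<otimes> inv (rep t))" using yc wr xc
          by (metis inv_closed inv_solve_right nat_pow_closed)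
        then show ?thesis using wc repc[OF t(1)] xc by (simp add: inv_mult m_ac)
      qed
      then have "y = N t k" using P_def N_def by simp
      then show ?thesis using t k by blast
    qed
  qed
  define A where "A t i j = (if t < c \<and> i < n \<and> j < n then
      (if j = i then Some (P t i) else if j = Suc i mod n then Some (N t i) else None) else None)"
    for t i j
  define prv where "prv j = (if j = 0 then n - 1 else j - 1)" for j
  have sne: "Suc i mod n \<noteq> i" if "i < n" for i
  proof (cases "Suc i < n")
    case True then show ?thesis by simp
  next
    case False then have "Suc i = n" using that by simp
    then show ?thesis using n2 by simp
  qed
  have sn: "Suc i mod n < n" for i using n0 by simp
  have prvn: "prv j < n" "prv j \<noteq> j" "Suc (prv j) mod n = j" if "j < n" for j
    using that n2 prev_lemma[OF n2 _ that, of "prv j"] unfolding prv_def by auto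
  have Anone: "A t i j \<noteq> None \<longleftrightarrow> (j = i \<or> j = Suc i mod n)" if "t < c" "i < n" "j < n" for t i j
    using that unfolding A_def by auto
  have rowset: "{j. j < n \<and> A t i j \<noteq> None} = {i, Suc i mod n}" if "t < c" "i < n" for t i
    using Anone[OF that] that sn by auto
  have colset: "{i. i < n \<and> A t i j \<noteq> None} = {j, prv j}" if "t < c" "j < n" for t j
  proof -
    have "i < n \<and> A t i j \<noteq> None \<longleftrightarrow> i = j \<or> i = prv j" for i
    proof (cases "i < n")
      case True
      then show ?thesis using Anone[OF that(1) True that(2)] prev_lemma[OF n2 True that(2)] prv_def by auto
    next
      case False
      then show ?thesis using that prvn by auto
    qed
    then show ?thesis by auto
  qed
  have AP: "the (A t i i) = P t i" if "t < c" "i < n" for t i using that A_def by simp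
  have AN: "the (A t i (Suc i mod n)) = N t i" if "t < c" "i < n" for t i using that A_def sne sn by simp
  have filled: "u \<in> filled_cells n n c A \<longleftrightarrow> (\<exists>t i j. u = (t, i, j) \<and> t < c \<and> i < n \<and> j < n \<and> (j = i \<or> j = Suc i mod n))" for u
  proof -
    obtain t i j where u: "u = (t, i, j)" by (cases u) auto
    have "u \<in> filled_cells n n c A \<longleftrightarrow> t < c \<and> i < n \<and> j < n \<and> A t i j \<noteq> None"
      unfolding filled_cells_def u by simp
    also have "\<dots> \<longleftrightarrow> t < c \<and> i < n \<and> j < n \<and> (j = i \<or> j = Suc i mod n)"
      using Anone[of t i j] by blast
    finally show ?thesis using u by blast
  qed
  have injF: "inj_on (\<lambda>(t,i,j). the (A t i j)) (filled_cells n n c A)"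
  proof (rule inj_onI)
    fix u v assume u: "u \<in> filled_cells n n c A" and v: "v \<in> filled_cells n n c A"
      and eq: "(\<lambda>(t,i,j). the (A t i j)) u = (\<lambda>(t,i,j). the (A t i j)) v"
    obtain t i j where tij: "u = (t, i, j)" "t < c" "i < n" "j < n" "j = i \<or> j = Suc i mod n" using u filled by blast
    obtain s k l where skl: "v = (s, k, l)" "s < c" "k < n" "l < n" "l = k \<or> l = Suc k mod n" using v filled by blast
    have eq': "the (A t i j) = the (A s k l)" using eq tij skl by simp
    show "u = v"
    proof (cases "j = i")
      case True
      then have e1: "the (A t i j) = P t i" using AP tij by simp
      show ?thesis
      proof (cases "l = k")
        case True
        then have "P t i = P s k" using e1 eq' AP skl by simp
        then show ?thesis using F1 tij skl \<open>j = i\<close> True by simp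
      next
        case False
        then have "P t i = N s k" using e1 eq' AN skl by auto
        then show ?thesis using F3 tij skl by blast
      qed
    next
      case False
      then have e1: "the (A t i j) = N t i" using AN tij by auto
      show ?thesis
      proof (cases "l = k")
        case True
        then have "N t i = P s k" using e1 eq' AP skl by simp
        then show ?thesis using F3 tij skl by metis
      next
        case False
        then have "N t i = N s k" using e1 eq' AN skl by auto
        then have "t = s \<and> i = k" using F2 tij skl by blast
        then show ?thesis using tij skl \<open>j \<noteq> i\<close> False by auto
      qed
    qed
  qed
  have imgF: "(\<lambda>(t,i,j). the (A t i j)) ` filled_cells n n c A = carrier G"
  proof
    show "(\<lambda>(t,i,j). the (A t i j)) ` filled_cells n n c A \<subseteq> carrier G"
    proof
      fix y assume "y \<in> (\<lambda>(t,i,j). the (A t i j)) ` filled_cells n n c A"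
      then obtain t i j where tij: "y = the (A t i j)" "t < c" "i < n" "j < n" "j = i \<or> j = Suc i mod n"
        using filled by fastforce
      then show "y \<in> carrier G" using AP AN Pc Nc by auto
    qed
    show "carrier G \<subseteq> (\<lambda>(t,i,j). the (A t i j)) ` filled_cells n n c A"
    proof
      fix y assume yc: "y \<in> carrier G"
      then obtain t i where ti: "t < c" "i < n" "y = P t i \<or> y = N t i" using F4 by blast
      from ti(3) show "y \<in> (\<lambda>(t,i,j). the (A t i j)) ` filled_cells n n c A"
      proof
        assume "y = P t i"
        moreover have "(t, i, i) \<in> filled_cells n n c A" using filled ti by blast
        ultimately show ?thesis using AP ti by (metis (no_types, lifting) case_prod_conv image_eqI)
      next
        assume "y = N t i"
        moreover have "(t, i, Suc i mod n) \<in> filled_cells n n c A" using filled ti sn by blast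
        ultimately show ?thesis using AN ti by (metis (no_types, lifting) case_prod_conv image_eqI)
      qed
    qed
  qed
  have rowsum: "finprod G (\<lambda>j. the (A t i j)) {j. j < n \<and> A t i j \<noteq> None} = w" if "t < c" "i < n" for t i
  proof -
    have "finprod G (\<lambda>j. the (A t i j)) {i, Suc i mod n} = the (A t i i) \<otimes> the (A t i (Suc i mod n))"
      by (rule fp2[OF comm_monoid_axioms sne[OF that(2), symmetric]])
        (use AP[OF that] AN[OF that] Pc[OF that(1)] Nc[OF that(1)] in simp_all)
    also have "\<dots> = P t i \<otimes> N t i" using AP[OF that] AN[OF that] by simp
    also have "\<dots> = w" using Pc[OF that(1)] wc N_def by simp
    finally show ?thesis using rowset[OF that] by simp
  qed
  have colsum: "finprod G (\<lambda>i. the (A t i j)) {i. i < n \<and> A t i j \<noteq> None} = w \<otimes> x" if "t < c" "j < n" for t j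
  proof -
    define q where "q = prv j"
    have q: "q < n" "q \<noteq> j" "Suc q mod n = j" using prvn[OF that(2)] q_def by auto
    have Aq: "the (A t q j) = N t q" using AN[OF that(1) q(1)] q(3) by simp
    have "finprod G (\<lambda>i. the (A t i j)) {j, q} = the (A t j j) \<otimes> the (A t q j)"
      by (rule fp2[OF comm_monoid_axioms q(2)[symmetric]])
        (use AP[OF that] Aq Pc[OF that(1)] Nc[OF that(1)] in simp_all)
    also have "\<dots> = P t j \<otimes> N t q" using AP[OF that] Aq by simp
    also have "P t j = P t q \<otimes> x"
    proof -
      have "x [^] j = x [^] Suc q" using pow_mod_ord[OF xc ordx, of "Suc q"] q(3) by simp
      then show ?thesis using P_def repc[OF that(1)] xc by (simp add: m_assoc)
    qed
    also have "P t q \<otimes> x \<otimes> N t q = w \<otimes> x"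
    proof -
      have "P t q \<otimes> x \<otimes> N t q = x \<otimes> (P t q \<otimes> (w \<otimes> inv (P t q)))"
        using Pc[OF that(1)] wc xc N_def by (simp add: m_ac)
      also have "\<dots> = x \<otimes> w" using Pc[OF that(1)] wc by simp
      finally show ?thesis using xc wc m_comm by simp
    qed
    finally show ?thesis using colset[OF that] q_def by simp
  qed
  have MRS: "MRS G n n 2 2 c A"
    unfolding MRS_def
  proof (intro conjI)
    show "card (carrier G) = n * 2 * c" using ordG order_def by (metis mult.commute mult.left_commute)
    show "bij_betw (\<lambda>(t,i,j). the (A t i j)) (filled_cells n n c A) (carrier G)"
      using injF imgF bij_betw_def by blast
    show "\<forall>t<c. \<forall>i<n. card {j. j < n \<and> A t i j \<noteq> None} = 2"
    proof (intro allI impI)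
      fix t i assume ti: "t < c" "i < n"
      have "i \<noteq> Suc i mod n" using sne[OF ti(2)] by metis
      then show "card {j. j < n \<and> A t i j \<noteq> None} = 2" using rowset[OF ti] by simp
    qed
    show "\<forall>t<c. \<forall>j<n. card {i. i < n \<and> A t i j \<noteq> None} = 2"
    proof (intro allI impI)
      fix t j assume tj: "t < c" "j < n"
      have "j \<noteq> prv j" using prvn[OF tj(2)] by metis
      then show "card {i. i < n \<and> A t i j \<noteq> None} = 2" using colset[OF tj] by simp
    qed
    show "\<exists>\<omega>\<in>carrier G. \<exists>\<delta>\<in>carrier G.
        (\<forall>t<c. \<forall>i<n. finprod G (\<lambda>j. the (A t i j)) {j. j < n \<and> A t i j \<noteq> None} = \<omega>) \<and>
        (\<forall>t<c. \<forall>j<n. finprod G (\<lambda>i. the (A t i j)) {i. i < n \<and> A t i j \<noteq> None} = \<delta>)"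
      using rowsum colsum wc xc by blast
  qed
  have diag: "\<forall>t<c. \<exists>d<n. \<forall>i<n. \<forall>j<n. (A t i j \<noteq> None \<longleftrightarrow> (\<exists>r<2. in_diag n (d + r) i j))"
  proof (intro allI impI)
    fix t assume t: "t < c"
    have "\<forall>i<n. \<forall>j<n. (A t i j \<noteq> None \<longleftrightarrow> (\<exists>r<2. in_diag n (0 + r) i j))"
    proof (intro allI impI)
      fix i j assume ij: "i < n" "j < n"
      have "(\<exists>r<2. in_diag n (0 + r) i j) \<longleftrightarrow> in_diag n 0 i j \<or> in_diag n 1 i j"
        using ex_less2[of "\<lambda>r. in_diag n (0 + r) i j"] by simp
      also have "\<dots> \<longleftrightarrow> j = i \<or> j = Suc i mod n" using diag_iff[OF ij] ij by simp
      finally show "A t i j \<noteq> None \<longleftrightarrow> (\<exists>r<2. in_diag n (0 + r) i j)" using Anone[OF t ij] by simp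
    qed
    then show "\<exists>d<n. \<forall>i<n. \<forall>j<n. (A t i j \<noteq> None \<longleftrightarrow> (\<exists>r<2. in_diag n (d + r) i j))"
      using n0 by blast
  qed
  show ?thesis unfolding diagonal_MRS_def using MRS diag by blast
qed

theorem theorem5p5:
  fixes G :: "('a, 'b) monoid_scheme" and n c :: nat
  assumes "n \<ge> 2" and "c \<ge> 1"
    and "comm_group G" and "finite (carrier G)"
    and "order G = 2 * n * c"
  shows "(\<exists>A. diagonal_MRS G n 2 c A) \<longleftrightarrow> (\<exists>x\<in>carrier G. group.ord G x = n)"
proof -
  interpret comm_group G by (rule assms(3))
  show ?thesis
  proof
    assume "\<exists>A. diagonal_MRS G n 2 c A"
    then obtain A where "diagonal_MRS G n 2 c A" by blast
    then show "\<exists>x\<in>carrier G. group.ord G x = n" using necessity[OF assms(1,2)] by blast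
  next
    assume "\<exists>x\<in>carrier G. group.ord G x = n"
    then obtain x where "x \<in> carrier G" "group.ord G x = n" by blast
    then show "\<exists>A. diagonal_MRS G n 2 c A" using sufficiency[OF assms(4,1,2,5)] by blast
  qed
qed

end
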